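(* Let $(H,\Delta,\Delta')$ be a Hopf brace over a field $k$ with first antipode $S$. Then the coalgebra $(H,\Delta,\varepsilon)$ is a left comodule coalgebra over the Hopf algebra $(H,m,1,\Delta',\epsilon,T)$ via the coaction $$\rho(h)=S(h_1)\,h_{21'}\otimes h_{22'},\qquad h\in H.$$ That is, $\rho$ makes $H$ a left $(H,\Delta')$-comodule, and writing $\rho(h)=h_{(-1)}\otimes h_{(0)}$ one has $h_{(-1)}\otimes h_{(0)1}\otimes h_{(0)2}=h_{1(-1)}h_{2(-1)}\otimes h_{1(0)}\otimes h_{2(0)}$ and $h_{(-1)}\varepsilon(h_{(0)})=\varepsilon(h)1_H$ for all $h\in H$.
   Context: All objects are over a field $k$. A Hopf brace $(H,\Delta,\Delta')$ consists of an algebra $(H,m,1)$ together with two Hopf algebra structures $(H,m,1,\Delta,\varepsilon,S)$ and $(H,m,1,\Delta',\epsilon,T)$ on the same algebra, satisfying for all $h\in H$ $$h_{1'}\otimes h_{2'1}\otimes h_{2'2}=h_{11'}\,S(h_2)\,h_{31'}\otimes h_{12'}\otimes h_{32'}.$$ Sweedler notation: $\Delta(h)=h_1\otimes h_2$, $\Delta'(h)=h_{1'}\otimes h_{2'}$ (summation omitted); $h_{21'}\otimes h_{22'}$ means $\Delta'$ applied to $h_2$. *)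

theory Defs
  imports Main "HOL.Vector_Spaces"
begin

text \<open>
  An element of H (x) H (resp. H (x) H (x) H) is represented by a finite
  list of pairs (resp. triples), i.e. a finite sum of simple tensors.
  Two representatives denote the same tensor iff they agree under all products
  of linear functionals (valid over a field). A coproduct is a function
  assigning to each h a Sweedler representative of Delta(h).
\<close>

definition lin_fun :: "('k::field \<Rightarrow> 'h::ab_group_add \<Rightarrow> 'h) \<Rightarrow> ('h \<Rightarrow> 'k) \<Rightarrow> bool" where
  "lin_fun sc \<phi> \<longleftrightarrow> Vector_Spaces.linear sc (*) \<phi>"

definition teq2 :: "('k::field \<Rightarrow> 'h::ab_group_add \<Rightarrow> 'h) \<Rightarrow> ('h \<times> 'h) list \<Rightarrow> ('h \<times> 'h) list \<Rightarrow> bool" where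
  "teq2 sc xs ys \<longleftrightarrow>
     (\<forall>\<phi> \<psi>. lin_fun sc \<phi> \<longrightarrow> lin_fun sc \<psi> \<longrightarrow>
        (\<Sum>(a,b)\<leftarrow>xs. \<phi> a * \<psi> b) = (\<Sum>(a,b)\<leftarrow>ys. \<phi> a * \<psi> b))"

definition teq3 :: "('k::field \<Rightarrow> 'h::ab_group_add \<Rightarrow> 'h) \<Rightarrow> ('h \<times> 'h \<times> 'h) list \<Rightarrow> ('h \<times> 'h \<times> 'h) list \<Rightarrow> bool" where
  "teq3 sc xs ys \<longleftrightarrow>
     (\<forall>\<phi> \<psi> \<chi>. lin_fun sc \<phi> \<longrightarrow> lin_fun sc \<psi> \<longrightarrow> lin_fun sc \<chi> \<longrightarrow>
        (\<Sum>(a,b,c)\<leftarrow>xs. \<phi> a * \<psi> b * \<chi> c) = (\<Sum>(a,b,c)\<leftarrow>ys. \<phi> a * \<psi> b * \<chi> c))"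

definition k_algebra :: "('k::field \<Rightarrow> 'h::ring_1 \<Rightarrow> 'h) \<Rightarrow> bool" where
  "k_algebra sc \<longleftrightarrow> vector_space sc \<and>
     (\<forall>c a b. sc c (a * b) = sc c a * b \<and> sc c (a * b) = a * sc c b)"

definition cop3 :: "('h \<Rightarrow> ('h \<times> 'h) list) \<Rightarrow> 'h \<Rightarrow> ('h \<times> 'h \<times> 'h) list" where
  "cop3 \<Delta> h = [(x1, x2, y). (x, y) \<leftarrow> \<Delta> h, (x1, x2) \<leftarrow> \<Delta> x]"

definition hopf_alg :: "('k::field \<Rightarrow> 'h::ring_1 \<Rightarrow> 'h) \<Rightarrow> ('h \<Rightarrow> ('h \<times> 'h) list)
    \<Rightarrow> ('h \<Rightarrow> 'k) \<Rightarrow> ('h \<Rightarrow> 'h) \<Rightarrow> bool" where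
  "hopf_alg sc \<Delta> \<epsilon> S \<longleftrightarrow>
     \<comment> \<open>linearity of \<Delta>, \<epsilon>, S\<close>
     (\<forall>a b. teq2 sc (\<Delta> (a + b)) (\<Delta> a @ \<Delta> b)) \<and>
     (\<forall>c a. teq2 sc (\<Delta> (sc c a)) (map (\<lambda>(x, y). (sc c x, y)) (\<Delta> a))) \<and>
     lin_fun sc \<epsilon> \<and>
     Vector_Spaces.linear sc sc S \<and>
     \<comment> \<open>coassociativity and counit\<close>
     (\<forall>h. teq3 sc (cop3 \<Delta> h) [(x, y1, y2). (x, y) \<leftarrow> \<Delta> h, (y1, y2) \<leftarrow> \<Delta> y]) \<and>
     (\<forall>h. (\<Sum>(x, y)\<leftarrow>\<Delta> h. sc (\<epsilon> x) y) = h) \<and>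
     (\<forall>h. (\<Sum>(x, y)\<leftarrow>\<Delta> h. sc (\<epsilon> y) x) = h) \<and>
     \<comment> \<open>\<Delta> and \<epsilon> are algebra maps\<close>
     (\<forall>a b. teq2 sc (\<Delta> (a * b)) [(x * u, y * v). (x, y) \<leftarrow> \<Delta> a, (u, v) \<leftarrow> \<Delta> b]) \<and>
     teq2 sc (\<Delta> 1) [(1, 1)] \<and>
     (\<forall>a b. \<epsilon> (a * b) = \<epsilon> a * \<epsilon> b) \<and> \<epsilon> 1 = 1 \<and>
     \<comment> \<open>antipode\<close>
     (\<forall>h. (\<Sum>(x, y)\<leftarrow>\<Delta> h. S x * y) = sc (\<epsilon> h) 1) \<and>
     (\<forall>h. (\<Sum>(x, y)\<leftarrow>\<Delta> h. x * S y) = sc (\<epsilon> h) 1)"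

text \<open>Hopf brace (H, \<Delta>, \<Delta>'):
  h_{1'} (x) h_{2'1} (x) h_{2'2} = h_{11'} S(h_2) h_{31'} (x) h_{12'} (x) h_{32'}.\<close>
definition hopf_brace :: "('k::field \<Rightarrow> 'h::ring_1 \<Rightarrow> 'h)
    \<Rightarrow> ('h \<Rightarrow> ('h \<times> 'h) list) \<Rightarrow> ('h \<Rightarrow> 'k) \<Rightarrow> ('h \<Rightarrow> 'h)
    \<Rightarrow> ('h \<Rightarrow> ('h \<times> 'h) list) \<Rightarrow> ('h \<Rightarrow> 'k) \<Rightarrow> ('h \<Rightarrow> 'h) \<Rightarrow> bool" where
  "hopf_brace sc \<Delta> \<epsilon> S \<Delta>' \<epsilon>' T \<longleftrightarrow>
     k_algebra sc \<and> hopf_alg sc \<Delta> \<epsilon> S \<and> hopf_alg sc \<Delta>' \<epsilon>' T \<and>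
     (\<forall>h. teq3 sc
        [(a, b1, b2). (a, b) \<leftarrow> \<Delta>' h, (b1, b2) \<leftarrow> \<Delta> b]
        [(p * S y * r, p', r'). (x, y, z) \<leftarrow> cop3 \<Delta> h, (p, p') \<leftarrow> \<Delta>' x, (r, r') \<leftarrow> \<Delta>' z])"

definition brace_coaction :: "('h::ring_1 \<Rightarrow> ('h \<times> 'h) list) \<Rightarrow> ('h \<Rightarrow> 'h)
    \<Rightarrow> ('h \<Rightarrow> ('h \<times> 'h) list) \<Rightarrow> 'h \<Rightarrow> ('h \<times> 'h) list" where
  "brace_coaction \<Delta> S \<Delta>' h = [(S x * u, v). (x, y) \<leftarrow> \<Delta> h, (u, v) \<leftarrow> \<Delta>' y]"

end

theory Submission
  imports Defs
begin

lemma sum_list_concat_map[simp]: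
  "sum_list (map f (concat (map g xs))) = (\<Sum>x\<leftarrow>xs. sum_list (map f (g x)))"
  by (induction xs) auto

lemma vs_field: "vector_space ((*) :: 'k::field \<Rightarrow> 'k \<Rightarrow> 'k)"
  by unfold_locales (simp_all add: algebra_simps)

lemma lin_fun_iff:
  assumes "vector_space sc"
  shows "lin_fun sc f \<longleftrightarrow> (\<forall>x y. f (x+y) = f x + f y) \<and> (\<forall>c x. f (sc c x) = c * f x)"
  using assms vs_field
  unfolding lin_fun_def Vector_Spaces.linear_def module_hom_def module_hom_axioms_def
    module_iff_vector_space by auto

lemma sum_list_swap_set:
  "(\<Sum>x\<leftarrow>xs. \<Sum>e\<in>E. f x e) = (\<Sum>e\<in>E. \<Sum>x\<leftarrow>xs. f x e)"
  by (induction xs) (auto simp: sum.distrib)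

context vector_space
begin

lemma lin_add: "lin_fun scale f \<Longrightarrow> f (x + y) = f x + f y"
  using lin_fun_iff[OF vector_space_axioms] by blast
lemma lin_scale: "lin_fun scale f \<Longrightarrow> f (scale c x) = c * f x"
  using lin_fun_iff[OF vector_space_axioms] by blast
lemma lin_zero: "lin_fun scale f \<Longrightarrow> f 0 = 0"
  using lin_scale[of f 0 0] by simp

lemma lin_sum_set: "lin_fun scale f \<Longrightarrow> f (\<Sum>e\<in>E. scale (c e) e) = (\<Sum>e\<in>E. c e * f e)"
  by (induction E rule: infinite_finite_induct) (auto simp: lin_zero lin_add lin_scale)

lemma lin_sum_list: "lin_fun scale f \<Longrightarrow> f (sum_list (map g L)) = (\<Sum>x\<leftarrow>L. f (g x))"
  by (induction L) (auto simp: lin_zero lin_add)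

definition "HB = extend_basis {}"
definition "rep v = representation HB v"

lemma HB: "independent HB" "span HB = UNIV"
  unfolding HB_def using independent_extend_basis[OF independent_empty] span_extend_basis[OF independent_empty]
  by auto

lemma rep_lin: "lin_fun scale (\<lambda>v. rep v b)"
  unfolding lin_fun_def rep_def using linear_representation[OF HB] .

definition "supp v = {b. rep v b \<noteq> 0}"
lemma supp_finite: "finite (supp v)"
  unfolding supp_def rep_def by (rule finite_representation)

lemma expand:
  assumes f: "lin_fun scale f" and E: "finite E" "supp v \<subseteq> E"
  shows "f v = (\<Sum>e\<in>E. rep v e * f e)"
proof -
  have "v = (\<Sum>b | rep v b \<noteq> 0. scale (rep v b) b)"
    unfolding rep_def using sum_nonzero_representation_eq[OF HB(1)] HB(2) by auto
  also have "\<dots> = (\<Sum>b\<in>E. scale (rep v b) b)"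
    using E unfolding supp_def by (intro sum.mono_neutral_left) auto
  finally have "f v = f (\<Sum>b\<in>E. scale (rep v b) b)" by simp
  also have "\<dots> = (\<Sum>e\<in>E. rep v e * f e)" using lin_sum_set[OF f] .
  finally show ?thesis .
qed

lemma separate:
  assumes "\<And>\<phi>. lin_fun scale \<phi> \<Longrightarrow> \<phi> u = \<phi> v"
  shows "u = v"
proof -
  have "rep u = rep v" using assms[OF rep_lin] by auto
  then show ?thesis unfolding rep_def
    using sum_nonzero_representation_eq[OF HB(1)] HB(2) by (metis UNIV_I)
qed

definition "suppL xs = (\<Union>p\<in>set xs. supp p)"
lemma suppL_finite: "finite (suppL xs)"
  unfolding suppL_def using supp_finite by auto

lemma T2:
  assumes teq: "teq2 scale xs ys"
    and F1: "\<And>b. lin_fun scale (\<lambda>a. F a b)" and F2: "\<And>a. lin_fun scale (\<lambda>b. F a b)"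
  shows "(\<Sum>(a,b)\<leftarrow>xs. F a b) = (\<Sum>(a,b)\<leftarrow>ys. F a b)"
proof -
  define E where "E = suppL (map fst xs @ map fst ys)"
  have E: "finite E" using suppL_finite E_def by auto
  have ex: "F a b = (\<Sum>e\<in>E. rep a e * F e b)" if "a \<in> set (map fst xs @ map fst ys)" for a b
    using expand[OF F1 E, of a b] that unfolding E_def suppL_def by blast
  have "(\<Sum>(a,b)\<leftarrow>xs. F a b) = (\<Sum>(a,b)\<leftarrow>xs. \<Sum>e\<in>E. rep a e * F e b)"
    by (intro arg_cong[where f=sum_list] map_cong refl) (clarsimp, rule ex, force)
  also have "\<dots> = (\<Sum>e\<in>E. \<Sum>(a,b)\<leftarrow>xs. rep a e * F e b)"
    by (simp add: split_def sum_list_swap_set)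
  also have "\<dots> = (\<Sum>e\<in>E. \<Sum>(a,b)\<leftarrow>ys. rep a e * F e b)"
    using teq rep_lin F2 unfolding teq2_def by auto
  also have "\<dots> = (\<Sum>(a,b)\<leftarrow>ys. \<Sum>e\<in>E. rep a e * F e b)"
    by (simp add: split_def sum_list_swap_set)
  also have "\<dots> = (\<Sum>(a,b)\<leftarrow>ys. F a b)"
    by (intro arg_cong[where f=sum_list] map_cong refl) (clarsimp, rule ex[symmetric], force)
  finally show ?thesis .
qed

lemma T3:
  assumes teq: "teq3 scale xs ys"
    and F1: "\<And>b c. lin_fun scale (\<lambda>a. F a b c)" and F2: "\<And>a c. lin_fun scale (\<lambda>b. F a b c)"
    and F3: "\<And>a b. lin_fun scale (\<lambda>c. F a b c)"
  shows "(\<Sum>(a,b,c)\<leftarrow>xs. F a b c) = (\<Sum>(a,b,c)\<leftarrow>ys. F a b c)"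
proof -
  define E where "E = suppL (map fst xs @ map fst ys)"
  have E: "finite E" using suppL_finite E_def by auto
  define E2 where "E2 = suppL (map (fst o snd) xs @ map (fst o snd) ys)"
  have E2: "finite E2" using suppL_finite E2_def by auto
  have ex: "F a b c = (\<Sum>e\<in>E. rep a e * F e b c)" if "a \<in> set (map fst xs @ map fst ys)" for a b c
    using expand[OF F1 E, of a b c] that unfolding E_def suppL_def by blast
  have ex2: "F e b c = (\<Sum>e2\<in>E2. rep b e2 * F e e2 c)" if "b \<in> set (map (fst o snd) xs @ map (fst o snd) ys)" for e b c
    using expand[OF F2 E2, of b e c] that unfolding E2_def suppL_def by blast
  have "(\<Sum>(a,b,c)\<leftarrow>xs. F a b c) = (\<Sum>(a,b,c)\<leftarrow>xs. \<Sum>e\<in>E. \<Sum>e2\<in>E2. rep a e * rep b e2 * F e e2 c)"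
    apply (intro arg_cong[where f=sum_list] map_cong refl)
    apply (clarsimp)
    apply (subst ex, force)
    apply (intro sum.cong refl)
    apply (subst ex2, force)
    by (simp add: sum_distrib_left mult.assoc)
  also have "\<dots> = (\<Sum>e\<in>E. \<Sum>e2\<in>E2. \<Sum>(a,b,c)\<leftarrow>xs. rep a e * rep b e2 * F e e2 c)"
    by (simp add: split_def sum_list_swap_set)
  also have "\<dots> = (\<Sum>e\<in>E. \<Sum>e2\<in>E2. \<Sum>(a,b,c)\<leftarrow>ys. rep a e * rep b e2 * F e e2 c)"
    using teq rep_lin F3 unfolding teq3_def by auto
  also have "\<dots> = (\<Sum>(a,b,c)\<leftarrow>ys. \<Sum>e\<in>E. \<Sum>e2\<in>E2. rep a e * rep b e2 * F e e2 c)"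
    by (simp add: split_def sum_list_swap_set)
  also have "\<dots> = (\<Sum>(a,b,c)\<leftarrow>ys. F a b c)"
    apply (intro arg_cong[where f=sum_list] map_cong refl)
    apply (clarsimp)
    apply (subst ex, force)
    apply (intro sum.cong refl)
    apply (subst ex2, force)
    by (simp add: sum_distrib_left mult.assoc)
  finally show ?thesis .
qed

end

definition coplin :: "('k::field \<Rightarrow> 'h::ab_group_add \<Rightarrow> 'h) \<Rightarrow> ('h \<Rightarrow> ('h \<times> 'h) list) \<Rightarrow> bool" where
  "coplin sc D \<longleftrightarrow> (\<forall>a b. teq2 sc (D (a + b)) (D a @ D b)) \<and>
     (\<forall>c a. teq2 sc (D (sc c a)) (map (\<lambda>(x, y). (sc c x, y)) (D a)))"

lemma sumc: "(\<And>a b. (a,b) \<in> set L \<Longrightarrow> F a b = G a b) \<Longrightarrow> (\<Sum>(a,b)\<leftarrow>L. F a b) = (\<Sum>(a,b)\<leftarrow>L. G a b)"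
  by (intro arg_cong[where f=sum_list] map_cong) auto

lemma swap: "((\<Sum>(a,b)\<leftarrow>L1. \<Sum>(c,d)\<leftarrow>L2. F a b c d) :: 'x::comm_monoid_add) = (\<Sum>(c,d)\<leftarrow>L2. \<Sum>(a,b)\<leftarrow>L1. F a b c d)"
  by (induction L1) (auto simp: split_def sum_list_addf)

locale kalg = vector_space sc for sc :: "'k::field \<Rightarrow> 'h::ring_1 \<Rightarrow> 'h" +
  assumes kalg: "k_algebra sc"
begin

abbreviation "lin \<equiv> lin_fun sc"

lemma sc_mult_left: "sc c a * b = sc c (a * b)"
  using kalg unfolding k_algebra_def by metis
lemma sc_mult_right: "a * sc c b = sc c (a * b)"
  using kalg unfolding k_algebra_def by metis

definition lmap :: "('h \<Rightarrow> 'h) \<Rightarrow> bool" where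
  "lmap g \<longleftrightarrow> (\<forall>x y. g (x+y) = g x + g y) \<and> (\<forall>c x. g (sc c x) = sc c (g x))"

lemma LM_id[simp]: "lmap (\<lambda>x. x)" unfolding lmap_def by auto
lemma LM_r[simp]: "lmap g \<Longrightarrow> lmap (\<lambda>x. g x * c)"
  unfolding lmap_def by (auto simp: distrib_right sc_mult_left)
lemma LM_l[simp]: "lmap g \<Longrightarrow> lmap (\<lambda>x. c * g x)"
  unfolding lmap_def by (auto simp: distrib_left sc_mult_right)

lemma LR1[simp]: "lin f \<Longrightarrow> lin (\<lambda>x. f x * c)"
  by (auto simp: lin_fun_iff[OF vector_space_axioms] algebra_simps)
lemma LR2[simp]: "lin f \<Longrightarrow> lin (\<lambda>x. c * f x)"
  by (auto simp: lin_fun_iff[OF vector_space_axioms] algebra_simps)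
lemma LR3[simp]: "(\<forall>u v. lin (\<lambda>x. F u v x)) \<Longrightarrow> lin (\<lambda>x. \<Sum>(u,v)\<leftarrow>L. F u v x)"
  by (induction L) (auto simp: lin_fun_iff[OF vector_space_axioms] algebra_simps sum_list_const_mult)
lemma LR3'[simp]: "(\<forall>u v w. lin (\<lambda>x. F u v w x)) \<Longrightarrow> lin (\<lambda>x. \<Sum>(u,v,w)\<leftarrow>L. F u v w x)"
  by (induction L) (auto simp: lin_fun_iff[OF vector_space_axioms] algebra_simps sum_list_const_mult)
lemma LR5: "lin \<phi> \<Longrightarrow> lmap g \<Longrightarrow> lin (\<lambda>x. \<phi> (g x))"
  by (auto simp: lin_fun_iff[OF vector_space_axioms] lmap_def)

lemma coplin_add: "coplin sc D \<Longrightarrow> (\<forall>v. lin (\<lambda>u. G u v)) \<Longrightarrow> (\<forall>u. lin (\<lambda>v. G u v)) \<Longrightarrow>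
   (\<Sum>(u,v)\<leftarrow>D (x + y). G u v) = (\<Sum>(u,v)\<leftarrow>D x. G u v) + (\<Sum>(u,v)\<leftarrow>D y. G u v)"
  unfolding coplin_def using T2[of "D (x+y)" "D x @ D y" G] by auto
lemma coplin_scale: "coplin sc D \<Longrightarrow> (\<forall>v. lin (\<lambda>u. G u v)) \<Longrightarrow> (\<forall>u. lin (\<lambda>v. G u v)) \<Longrightarrow>
   (\<Sum>(u,v)\<leftarrow>D (sc c x). G u v) = c * (\<Sum>(u,v)\<leftarrow>D x. G u v)"
proof -
  assume a: "coplin sc D" "\<forall>v. lin (\<lambda>u. G u v)" "\<forall>u. lin (\<lambda>v. G u v)"
  have g: "G (sc c a) b = c * G a b" for a b using a(2) lin_scale by blast
  show ?thesis using a unfolding coplin_def using T2[of "D (sc c x)" "map (\<lambda>(x, y). (sc c x, y)) (D x)" G]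
    by (auto simp: o_def split_def g sum_list_const_mult)
qed

lemma LR4: "coplin sc D \<Longrightarrow> (\<forall>v. lin (\<lambda>u. G u v)) \<Longrightarrow> (\<forall>u. lin (\<lambda>v. G u v)) \<Longrightarrow> lmap g \<Longrightarrow>
   lin (\<lambda>x. \<Sum>(u,v)\<leftarrow>D (g x). G u v)"
  by (auto simp: lin_fun_iff[OF vector_space_axioms] lmap_def coplin_add coplin_scale)

end


locale hopfa = kalg sc for sc :: "'k::field \<Rightarrow> 'h::ring_1 \<Rightarrow> 'h" +
  fixes D :: "'h \<Rightarrow> ('h \<times> 'h) list" and e :: "'h \<Rightarrow> 'k" and s :: "'h \<Rightarrow> 'h"
  assumes ha: "hopf_alg sc D e s"
begin

lemma coplin: "coplin sc D" using ha unfolding hopf_alg_def coplin_def by blast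
lemma e_lin[simp]: "lin e" using ha unfolding hopf_alg_def by blast
lemma e_mult: "e (a * b) = e a * e b" using ha unfolding hopf_alg_def by blast
lemma e_one: "e 1 = 1" using ha unfolding hopf_alg_def by blast
lemma s_lmap[simp]: "lmap s"
proof -
  have "Vector_Spaces.linear sc sc s" using ha unfolding hopf_alg_def by blast
  then interpret linear sc sc s .
  show ?thesis unfolding lmap_def by (simp add: add scale)
qed
lemma e_comp[simp]: "lmap g \<Longrightarrow> lin (\<lambda>x. e (g x))"
  using LR5[OF e_lin] .
lemma s_comp[simp]: "lmap g \<Longrightarrow> lmap (\<lambda>x. s (g x))"
  using s_lmap unfolding lmap_def by simp

lemma coassoc:
  assumes "\<forall>b c. lin (\<lambda>a. F a b c)" "\<forall>a c. lin (\<lambda>b. F a b c)" "\<forall>a b. lin (\<lambda>c. F a b c)"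
  shows "(\<Sum>(x,y)\<leftarrow>D h. \<Sum>(x1,x2)\<leftarrow>D x. F x1 x2 y) = (\<Sum>(x,y)\<leftarrow>D h. \<Sum>(y1,y2)\<leftarrow>D y. F x y1 y2)"
proof -
  have "teq3 sc (cop3 D h) [(x, y1, y2). (x, y) \<leftarrow> D h, (y1, y2) \<leftarrow> D y]"
    using ha unfolding hopf_alg_def by blast
  from T3[OF this, of F] assms show ?thesis
    by (simp add: cop3_def o_def prod.case_distrib)
qed

lemma counit_l: "lin f \<Longrightarrow> (\<Sum>(a,b)\<leftarrow>D h. e a * f b) = f h"
proof -
  assume f: "lin f"
  have "(\<Sum>(x, y)\<leftarrow>D h. sc (e x) y) = h" using ha unfolding hopf_alg_def by blast
  then have "f h = f (\<Sum>(x, y)\<leftarrow>D h. sc (e x) y)" by simp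
  also have "\<dots> = (\<Sum>(a,b)\<leftarrow>D h. e a * f b)"
    by (simp add: lin_sum_list[OF f] split_def lin_scale[OF f])
  finally show ?thesis by simp
qed

lemma counit_r: "lin f \<Longrightarrow> (\<Sum>(a,b)\<leftarrow>D h. f a * e b) = f h"
proof -
  assume f: "lin f"
  have "(\<Sum>(x, y)\<leftarrow>D h. sc (e y) x) = h" using ha unfolding hopf_alg_def by blast
  then have "f h = f (\<Sum>(x, y)\<leftarrow>D h. sc (e y) x)" by simp
  also have "\<dots> = (\<Sum>(a,b)\<leftarrow>D h. f a * e b)"
    by (simp add: lin_sum_list[OF f] split_def lin_scale[OF f] mult.commute)
  finally show ?thesis by simp
qed

lemma mult:
  assumes "\<forall>v. lin (\<lambda>u. G u v)" "\<forall>u. lin (\<lambda>v. G u v)"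
  shows "(\<Sum>(u,v)\<leftarrow>D (a * b). G u v) = (\<Sum>(x,y)\<leftarrow>D a. \<Sum>(u,v)\<leftarrow>D b. G (x*u) (y*v))"
proof -
  have "teq2 sc (D (a * b)) [(x * u, y * v). (x, y) \<leftarrow> D a, (u, v) \<leftarrow> D b]"
    using ha unfolding hopf_alg_def by blast
  from T2[OF this, of G] assms show ?thesis
    by (simp add: o_def prod.case_distrib)
qed

lemma unit:
  assumes "\<forall>v. lin (\<lambda>u. G u v)" "\<forall>u. lin (\<lambda>v. G u v)"
  shows "(\<Sum>(u,v)\<leftarrow>D 1. G u v) = G 1 1"
proof -
  have "teq2 sc (D 1) [(1, 1)]"
    using ha unfolding hopf_alg_def by blast
  from T2[OF this, of G] assms show ?thesis by simp
qed

lemma antipode_l: "lin f \<Longrightarrow> (\<Sum>(a,b)\<leftarrow>D h. f (s a * b)) = e h * f 1"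
proof -
  assume f: "lin f"
  have "(\<Sum>(x, y)\<leftarrow>D h. s x * y) = sc (e h) 1" using ha unfolding hopf_alg_def by blast
  then have "f (sc (e h) 1) = f (\<Sum>(x, y)\<leftarrow>D h. s x * y)" by simp
  then show ?thesis by (simp add: lin_sum_list[OF f] split_def lin_scale[OF f])
qed

lemma antipode_r: "lin f \<Longrightarrow> (\<Sum>(a,b)\<leftarrow>D h. f (a * s b)) = e h * f 1"
proof -
  assume f: "lin f"
  have "(\<Sum>(x, y)\<leftarrow>D h. x * s y) = sc (e h) 1" using ha unfolding hopf_alg_def by blast
  then have "f (sc (e h) 1) = f (\<Sum>(x, y)\<leftarrow>D h. x * s y)" by simp
  then show ?thesis by (simp add: lin_sum_list[OF f] split_def lin_scale[OF f])
qed

lemma LRD[simp]: "(\<forall>v. lin (\<lambda>u. G u v)) \<Longrightarrow> (\<forall>u. lin (\<lambda>v. G u v)) \<Longrightarrow> lmap g \<Longrightarrow>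
   lin (\<lambda>x. \<Sum>(u,v)\<leftarrow>D (g x). G u v)"
  using LR4[OF coplin] by blast

lemma fold4_rl:
  assumes "\<forall>b c d. lin (\<lambda>a. K a b c d)" "\<forall>a c d. lin (\<lambda>b. K a b c d)"
    "\<forall>a b d. lin (\<lambda>c. K a b c d)" "\<forall>a b c. lin (\<lambda>d. K a b c d)"
  shows "(\<Sum>(x,y)\<leftarrow>D h. \<Sum>(z,w)\<leftarrow>D y. \<Sum>(z1,z2)\<leftarrow>D z. K x z1 z2 w) =
    (\<Sum>(x,y)\<leftarrow>D h. \<Sum>(y1,y2)\<leftarrow>D y. \<Sum>(z1,z2)\<leftarrow>D y2. K x y1 z1 z2)"
  apply (rule sumc)
  subgoal for x y using coassoc[of "\<lambda>a b c. K x a b c" y] assms by simp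
  done

lemma fold4_mid:
  assumes "\<forall>b c d. lin (\<lambda>a. K a b c d)" "\<forall>a c d. lin (\<lambda>b. K a b c d)"
    "\<forall>a b d. lin (\<lambda>c. K a b c d)" "\<forall>a b c. lin (\<lambda>d. K a b c d)"
  shows "(\<Sum>(x,y)\<leftarrow>D h. \<Sum>(x1,x2)\<leftarrow>D x. \<Sum>(y1,y2)\<leftarrow>D y. K x1 x2 y1 y2) =
    (\<Sum>(x,y)\<leftarrow>D h. \<Sum>(y1,y2)\<leftarrow>D y. \<Sum>(z1,z2)\<leftarrow>D y2. K x y1 z1 z2)"
  using coassoc[of "\<lambda>a b y. \<Sum>(y1,y2)\<leftarrow>D y. K a b y1 y2" h] assms by simp

lemma fold4_lll:
  assumes "\<forall>b c d. lin (\<lambda>a. K a b c d)" "\<forall>a c d. lin (\<lambda>b. K a b c d)"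
    "\<forall>a b d. lin (\<lambda>c. K a b c d)" "\<forall>a b c. lin (\<lambda>d. K a b c d)"
  shows "(\<Sum>(x,y)\<leftarrow>D h. \<Sum>(a,b)\<leftarrow>D x. \<Sum>(a1,a2)\<leftarrow>D a. K a1 a2 b y) =
    (\<Sum>(x,y)\<leftarrow>D h. \<Sum>(y1,y2)\<leftarrow>D y. \<Sum>(z1,z2)\<leftarrow>D y2. K x y1 z1 z2)"
proof -
  have "(\<Sum>(x,y)\<leftarrow>D h. \<Sum>(a,b)\<leftarrow>D x. \<Sum>(a1,a2)\<leftarrow>D a. K a1 a2 b y) =
     (\<Sum>(x,y)\<leftarrow>D h. \<Sum>(y1,y2)\<leftarrow>D y. \<Sum>(a1,a2)\<leftarrow>D x. K a1 a2 y1 y2)"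
    using coassoc[of "\<lambda>a b y. \<Sum>(a1,a2)\<leftarrow>D a. K a1 a2 b y" h] assms by simp
  also have "\<dots> = (\<Sum>(x,y)\<leftarrow>D h. \<Sum>(x1,x2)\<leftarrow>D x. \<Sum>(y1,y2)\<leftarrow>D y. K x1 x2 y1 y2)"
    by (rule sumc) (rule swap)
  also have "\<dots> = (\<Sum>(x,y)\<leftarrow>D h. \<Sum>(y1,y2)\<leftarrow>D y. \<Sum>(z1,z2)\<leftarrow>D y2. K x y1 z1 z2)"
    by (rule fold4_mid) (use assms in auto)
  finally show ?thesis .
qed


end


locale hbr = kalg sc for sc :: "'k::field \<Rightarrow> 'h::ring_1 \<Rightarrow> 'h" +
  fixes \<Delta> :: "'h \<Rightarrow> ('h \<times> 'h) list" and \<epsilon> :: "'h \<Rightarrow> 'k" and S :: "'h \<Rightarrow> 'h"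
    and \<Delta>' :: "'h \<Rightarrow> ('h \<times> 'h) list" and \<epsilon>' :: "'h \<Rightarrow> 'k" and T :: "'h \<Rightarrow> 'h"
  assumes HA1: "hopf_alg sc \<Delta> \<epsilon> S" and HA2: "hopf_alg sc \<Delta>' \<epsilon>' T"
    and BR: "\<forall>h. teq3 sc
        [(a, b1, b2). (a, b) \<leftarrow> \<Delta>' h, (b1, b2) \<leftarrow> \<Delta> b]
        [(p * S y * r, p', r'). (x, y, z) \<leftarrow> cop3 \<Delta> h, (p, p') \<leftarrow> \<Delta>' x, (r, r') \<leftarrow> \<Delta>' z]"
begin

sublocale D1: hopfa sc \<Delta> \<epsilon> S by unfold_locales (rule HA1)
sublocale D2: hopfa sc \<Delta>' \<epsilon>' T by unfold_locales (rule HA2)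

lemma brace:
  assumes "\<forall>b c. lin (\<lambda>a. F a b c)" "\<forall>a c. lin (\<lambda>b. F a b c)" "\<forall>a b. lin (\<lambda>c. F a b c)"
  shows "(\<Sum>(a,b)\<leftarrow>\<Delta>' h. \<Sum>(b1,b2)\<leftarrow>\<Delta> b. F a b1 b2) =
    (\<Sum>(x,y)\<leftarrow>\<Delta> h. \<Sum>(x1,x2)\<leftarrow>\<Delta> x. \<Sum>(p,p')\<leftarrow>\<Delta>' x1. \<Sum>(r,r')\<leftarrow>\<Delta>' y. F (p * S x2 * r) p' r')"
  using T3[OF BR[rule_format, of h], of F] assms
  by (simp add: cop3_def o_def prod.case_distrib)

lemma epsS: "\<epsilon>' (S h) = \<epsilon> h"
proof -
  have "\<epsilon> h = (\<Sum>(a,b)\<leftarrow>\<Delta>' h. \<epsilon>' a * \<epsilon> b)"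
    using D2.counit_l[of \<epsilon> h] by simp
  also have "\<dots> = (\<Sum>(a,b)\<leftarrow>\<Delta>' h. \<Sum>(b1,b2)\<leftarrow>\<Delta> b. \<epsilon>' a * \<epsilon> b1 * \<epsilon> b2)"
    apply (rule sumc)
    subgoal for a b using D1.counit_l[of "\<lambda>x. \<epsilon>' a * \<epsilon> x" b] by (simp add: mult_ac)
    done
  also have "\<dots> = (\<Sum>(x,y)\<leftarrow>\<Delta> h. \<Sum>(x1,x2)\<leftarrow>\<Delta> x. \<Sum>(p,p')\<leftarrow>\<Delta>' x1. \<Sum>(r,r')\<leftarrow>\<Delta>' y. \<epsilon>' (p * S x2 * r) * \<epsilon> p' * \<epsilon> r')"
    by (rule brace) simp_all
  also have "\<dots> = (\<Sum>(x,y)\<leftarrow>\<Delta> h. \<Sum>(x1,x2)\<leftarrow>\<Delta> x. \<Sum>(p,p')\<leftarrow>\<Delta>' x1. \<epsilon>' p * \<epsilon> p' * \<epsilon>' (S x2) * \<epsilon> y)"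
    apply (rule sumc)+
    subgoal for x y x1 x2 p p' using D2.counit_l[of "\<lambda>x. \<epsilon>' p * \<epsilon> p' * \<epsilon>' (S x2) * \<epsilon> x" y]
      by (simp add: mult_ac D2.e_mult)
    done
  also have "\<dots> = (\<Sum>(x,y)\<leftarrow>\<Delta> h. \<Sum>(x1,x2)\<leftarrow>\<Delta> x. \<epsilon> x1 * \<epsilon>' (S x2) * \<epsilon> y)"
    apply (rule sumc)+
    subgoal for x y x1 x2 using D2.counit_l[of "\<lambda>p. \<epsilon> p * \<epsilon>' (S x2) * \<epsilon> y" x1]
      by (simp add: mult_ac)
    done
  also have "\<dots> = (\<Sum>(x,y)\<leftarrow>\<Delta> h. \<epsilon>' (S x) * \<epsilon> y)"
    apply (rule sumc)+
    subgoal for x y using D1.counit_l[of "\<lambda>p. \<epsilon>' (S p) * \<epsilon> y" x]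
      by (simp add: mult_ac)
    done
  also have "\<dots> = \<epsilon>' (S h)"
    using D1.counit_r[of "\<lambda>p. \<epsilon>' (S p)" h] by (simp add: mult_ac)
  finally show ?thesis by simp
qed


lemma eps_eq_pt: "\<epsilon>' h = \<epsilon> h"
proof -
  have "\<epsilon>' h = (\<Sum>(a,b)\<leftarrow>\<Delta> h. \<epsilon> a * \<epsilon>' b)" using D1.counit_l[of \<epsilon>' h] by simp
  also have "\<dots> = (\<Sum>(a,b)\<leftarrow>\<Delta> h. \<epsilon>' (S a * b))" by (simp add: epsS D2.e_mult)
  also have "\<dots> = \<epsilon> h" using D1.antipode_l[of \<epsilon>' h] by (simp add: D2.e_one)
  finally show ?thesis .
qed

lemma eps_eq: "\<epsilon>' = \<epsilon>" using eps_eq_pt by auto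


lemma conv_I:
  assumes G1: "\<forall>v. lin (\<lambda>u. G u v)" and G2: "\<forall>u. lin (\<lambda>v. G u v)"
  shows "(\<Sum>(x1,x2)\<leftarrow>\<Delta> x. \<Sum>(p,q)\<leftarrow>\<Delta>' x1. \<Sum>(a,b)\<leftarrow>\<Delta> x2. \<Sum>(a1,a2)\<leftarrow>\<Delta> a. \<Sum>(m,n)\<leftarrow>\<Delta>' a2.
            G (p * S a1 * m * S b) (q * S n)) = \<epsilon> x * G 1 1"
proof -
  have [simp]: "lmap g \<Longrightarrow> lin (\<lambda>u. G (g u) c)" for g c using LR5 G1 by blast
  have [simp]: "lmap g \<Longrightarrow> lin (\<lambda>u. G c (g u))" for g c using LR5 G2 by blast
  have "(\<Sum>(x1,x2)\<leftarrow>\<Delta> x. \<Sum>(p,q)\<leftarrow>\<Delta>' x1. \<Sum>(a,b)\<leftarrow>\<Delta> x2. \<Sum>(a1,a2)\<leftarrow>\<Delta> a. \<Sum>(m,n)\<leftarrow>\<Delta>' a2.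
            G (p * S a1 * m * S b) (q * S n)) =
        (\<Sum>(x1,x2)\<leftarrow>\<Delta> x. \<Sum>(a,b)\<leftarrow>\<Delta> x2. \<Sum>(a1,a2)\<leftarrow>\<Delta> a. \<Sum>(p,q)\<leftarrow>\<Delta>' x1. \<Sum>(m,n)\<leftarrow>\<Delta>' a2.
            G (p * S a1 * m * S b) (q * S n))"
    apply (rule sumc)
    apply (rule trans[OF swap])
    apply (rule sumc)
    apply (rule swap)
    done
  also have "\<dots> = (\<Sum>(x,y)\<leftarrow>\<Delta> x. \<Sum>(y1,y2)\<leftarrow>\<Delta> y. \<Sum>(z1,z2)\<leftarrow>\<Delta> y2.
     (\<lambda>c1 c2 c3 c4. \<Sum>(p,q)\<leftarrow>\<Delta>' c1. \<Sum>(m,n)\<leftarrow>\<Delta>' c3. G (p * S c2 * m * S c4) (q * S n)) x y1 z1 z2)"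
    by (rule D1.fold4_rl) simp_all
  also have "\<dots> = (\<Sum>(X,b)\<leftarrow>\<Delta> x. \<Sum>(Y,a2)\<leftarrow>\<Delta> X. \<Sum>(x1,a1)\<leftarrow>\<Delta> Y. \<Sum>(p,q)\<leftarrow>\<Delta>' x1. \<Sum>(m,n)\<leftarrow>\<Delta>' a2.
            G (p * S a1 * m * S b) (q * S n))"
    by (rule D1.fold4_lll[symmetric]) simp_all
  also have "\<dots> = (\<Sum>(X,b)\<leftarrow>\<Delta> x. \<Sum>(u,v)\<leftarrow>\<Delta>' X. \<Sum>(v1,v2)\<leftarrow>\<Delta> v. G (u * S b) (v1 * S v2))"
    apply (rule sumc)
    subgoal for X b using brace[of "\<lambda>A B C. G (A * S b) (B * S C)" X] by simp
    done
  also have "\<dots> = (\<Sum>(X,b)\<leftarrow>\<Delta> x. \<Sum>(u,v)\<leftarrow>\<Delta>' X. G (u * S b) 1 * \<epsilon> v)"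
    apply (rule sumc)+
    subgoal for X b u v using D1.antipode_r[of "\<lambda>w. G (u * S b) w" v] by (simp add: mult.commute)
    done
  also have "\<dots> = (\<Sum>(X,b)\<leftarrow>\<Delta> x. G (X * S b) 1)"
    apply (rule sumc)+
    subgoal for X b using D2.counit_r[of "\<lambda>u. G (u * S b) 1" X] by (simp add: eps_eq)
    done
  also have "\<dots> = \<epsilon> x * G 1 1"
    using D1.antipode_r[of "\<lambda>w. G w 1" x] by simp
  finally show ?thesis .
qed


lemma conv_II:
  assumes G1: "\<forall>v. lin (\<lambda>u. G u v)" and G2: "\<forall>u. lin (\<lambda>v. G u v)"
  shows "(\<Sum>(x1,y1)\<leftarrow>\<Delta> z. \<Sum>(p,q)\<leftarrow>\<Delta>' (S x1). \<Sum>(r,s)\<leftarrow>\<Delta>' y1. G (p*r) (q*s)) = \<epsilon> z * G 1 1"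
proof -
  have [simp]: "lmap g \<Longrightarrow> lin (\<lambda>u. G (g u) c)" for g c using LR5 G1 by blast
  have [simp]: "lmap g \<Longrightarrow> lin (\<lambda>u. G c (g u))" for g c using LR5 G2 by blast
  have "(\<Sum>(x1,y1)\<leftarrow>\<Delta> z. \<Sum>(p,q)\<leftarrow>\<Delta>' (S x1). \<Sum>(r,s)\<leftarrow>\<Delta>' y1. G (p*r) (q*s)) =
     (\<Sum>(x1,y1)\<leftarrow>\<Delta> z. \<Sum>(u,v)\<leftarrow>\<Delta>' (S x1 * y1). G u v)"
    apply (rule sumc)
    subgoal for x1 y1 using D2.mult[of G "S x1" y1] G1 G2 by simp
    done
  also have "\<dots> = \<epsilon> z * (\<Sum>(u,v)\<leftarrow>\<Delta>' 1. G u v)"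
    using D1.antipode_l[of "\<lambda>w. \<Sum>(u,v)\<leftarrow>\<Delta>' w. G u v" z] G1 G2 by simp
  also have "\<dots> = \<epsilon> z * G 1 1" using D2.unit[of G] G1 G2 by simp
  finally show ?thesis .
qed

lemma DS:
  assumes G1: "\<forall>v. lin (\<lambda>u. G u v)" and G2: "\<forall>u. lin (\<lambda>v. G u v)"
  shows "(\<Sum>(p,q)\<leftarrow>\<Delta>' (S x). G p q) =
    (\<Sum>(a,b)\<leftarrow>\<Delta> x. \<Sum>(a1,a2)\<leftarrow>\<Delta> a. \<Sum>(m,n)\<leftarrow>\<Delta>' a2. G (S a1 * m * S b) (S n))"
proof -
  have [simp]: "lmap g \<Longrightarrow> lin (\<lambda>u. G (g u) c)" for g c using LR5 G1 by blast
  have [simp]: "lmap g \<Longrightarrow> lin (\<lambda>u. G c (g u))" for g c using LR5 G2 by blast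
  have "(\<Sum>(p,q)\<leftarrow>\<Delta>' (S x). G p q) = (\<Sum>(x1,x2)\<leftarrow>\<Delta> x. (\<Sum>(p,q)\<leftarrow>\<Delta>' (S x1). G p q) * \<epsilon> x2)"
    using D1.counit_r[of "\<lambda>z. \<Sum>(p,q)\<leftarrow>\<Delta>' (S z). G p q" x] G1 G2 by simp
  also have "\<dots> = (\<Sum>(x1,x2)\<leftarrow>\<Delta> x. \<Sum>(p,q)\<leftarrow>\<Delta>' (S x1). \<Sum>(y1,y2)\<leftarrow>\<Delta> x2. \<Sum>(p',q')\<leftarrow>\<Delta>' y1.
      \<Sum>(a,b)\<leftarrow>\<Delta> y2. \<Sum>(a1,a2)\<leftarrow>\<Delta> a. \<Sum>(m,n)\<leftarrow>\<Delta>' a2. G (p * (p' * S a1 * m * S b)) (q * (q' * S n)))"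
    apply (rule sumc)
    subgoal for x1 x2
      apply (simp add: sum_list_mult_const[symmetric] split_def del: sum_list_mult_const)
      apply (rule arg_cong[where f=sum_list], rule map_cong, rule refl)
      subgoal for pq using conv_I[of "\<lambda>u v. G (fst pq * u) (snd pq * v)" x2] by (simp add: mult.commute split_def)
      done
    done
  also have "\<dots> = (\<Sum>(x1,x2)\<leftarrow>\<Delta> x. \<Sum>(y1,y2)\<leftarrow>\<Delta> x2. \<Sum>(p,q)\<leftarrow>\<Delta>' (S x1). \<Sum>(p',q')\<leftarrow>\<Delta>' y1.
      \<Sum>(a,b)\<leftarrow>\<Delta> y2. \<Sum>(a1,a2)\<leftarrow>\<Delta> a. \<Sum>(m,n)\<leftarrow>\<Delta>' a2. G (p * (p' * S a1 * m * S b)) (q * (q' * S n)))"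
    by (rule sumc) (rule swap)
  also have "\<dots> = (\<Sum>(z,y2)\<leftarrow>\<Delta> x. \<Sum>(x1,y1)\<leftarrow>\<Delta> z. \<Sum>(p,q)\<leftarrow>\<Delta>' (S x1). \<Sum>(p',q')\<leftarrow>\<Delta>' y1.
      \<Sum>(a,b)\<leftarrow>\<Delta> y2. \<Sum>(a1,a2)\<leftarrow>\<Delta> a. \<Sum>(m,n)\<leftarrow>\<Delta>' a2. G (p * (p' * S a1 * m * S b)) (q * (q' * S n)))"
    by (rule D1.coassoc[symmetric]) simp_all
  also have "\<dots> = (\<Sum>(z,y2)\<leftarrow>\<Delta> x. \<epsilon> z * (\<Sum>(a,b)\<leftarrow>\<Delta> y2. \<Sum>(a1,a2)\<leftarrow>\<Delta> a. \<Sum>(m,n)\<leftarrow>\<Delta>' a2. G (S a1 * m * S b) (S n)))"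
    apply (rule sumc)
    subgoal for z y2
      using conv_II[of "\<lambda>A B. \<Sum>(a,b)\<leftarrow>\<Delta> y2. \<Sum>(a1,a2)\<leftarrow>\<Delta> a. \<Sum>(m,n)\<leftarrow>\<Delta>' a2. G (A * (S a1 * m * S b)) (B * S n)" z]
      by (simp add: mult.assoc)
    done
  also have "\<dots> = (\<Sum>(a,b)\<leftarrow>\<Delta> x. \<Sum>(a1,a2)\<leftarrow>\<Delta> a. \<Sum>(m,n)\<leftarrow>\<Delta>' a2. G (S a1 * m * S b) (S n))"
    using D1.counit_l[of "\<lambda>y2. \<Sum>(a,b)\<leftarrow>\<Delta> y2. \<Sum>(a1,a2)\<leftarrow>\<Delta> a. \<Sum>(m,n)\<leftarrow>\<Delta>' a2. G (S a1 * m * S b) (S n)" x]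
    by simp
  finally show ?thesis .
qed


abbreviation "\<rho> \<equiv> brace_coaction \<Delta> S \<Delta>'"

lemma rho_sum: "(\<Sum>(a,b)\<leftarrow>\<rho> h. F a b) = (\<Sum>(x,y)\<leftarrow>\<Delta> h. \<Sum>(u,v)\<leftarrow>\<Delta>' y. F (S x * u) v)"
  by (simp add: brace_coaction_def o_def prod.case_distrib)

lemma part3:
  assumes \<phi>: "lin \<phi>" and \<psi>: "lin \<psi>" and \<chi>: "lin \<chi>"
  shows "(\<Sum>(x,y)\<leftarrow>\<Delta> h. \<Sum>(u,v)\<leftarrow>\<Delta>' y. \<Sum>(a1,a2)\<leftarrow>\<Delta>' (S x * u). \<phi> a1 * \<psi> a2 * \<chi> v) =
    (\<Sum>(x,y)\<leftarrow>\<Delta> h. \<Sum>(u,v)\<leftarrow>\<Delta>' y. \<Sum>(y1,y2)\<leftarrow>\<Delta> v. \<Sum>(u',v')\<leftarrow>\<Delta>' y2. \<phi> (S x * u) * \<psi> (S y1 * u') * \<chi> v')"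
proof -
  have [simp]: "lmap g \<Longrightarrow> lin (\<lambda>x. \<phi> (g x))" for g using LR5 \<phi> by blast
  have [simp]: "lmap g \<Longrightarrow> lin (\<lambda>x. \<psi> (g x))" for g using LR5 \<psi> by blast
  have [simp]: "lmap g \<Longrightarrow> lin (\<lambda>x. \<chi> (g x))" for g using LR5 \<chi> by blast
  note [simp] = \<phi> \<psi> \<chi>
  define K where "K = (\<lambda>c1 c2 c3 c4. \<Sum>(m,n)\<leftarrow>\<Delta>' c2. \<Sum>(r,t)\<leftarrow>\<Delta>' c4. \<Sum>(s,v)\<leftarrow>\<Delta>' t.
      \<phi> (S c1 * m * S c3 * r) * \<psi> (S n * s) * \<chi> v)"
  have K1: "\<forall>b c d. lin (\<lambda>a. K a b c d)" "\<forall>a c d. lin (\<lambda>b. K a b c d)"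
    "\<forall>a b d. lin (\<lambda>c. K a b c d)" "\<forall>a b c. lin (\<lambda>d. K a b c d)"
    unfolding K_def by simp_all
  have "(\<Sum>(x,y)\<leftarrow>\<Delta> h. \<Sum>(u,v)\<leftarrow>\<Delta>' y. \<Sum>(a1,a2)\<leftarrow>\<Delta>' (S x * u). \<phi> a1 * \<psi> a2 * \<chi> v) =
     (\<Sum>(x,y)\<leftarrow>\<Delta> h. \<Sum>(u,v)\<leftarrow>\<Delta>' y. \<Sum>(p,q)\<leftarrow>\<Delta>' (S x). \<Sum>(r,s)\<leftarrow>\<Delta>' u. \<phi> (p*r) * \<psi> (q*s) * \<chi> v)"
    apply (rule sumc)+
    subgoal for x y u v using D2.mult[of "\<lambda>a1 a2. \<phi> a1 * \<psi> a2 * \<chi> v" "S x" u] by simp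
    done
  also have "\<dots> = (\<Sum>(x,y)\<leftarrow>\<Delta> h. \<Sum>(p,q)\<leftarrow>\<Delta>' (S x). \<Sum>(u,v)\<leftarrow>\<Delta>' y. \<Sum>(r,s)\<leftarrow>\<Delta>' u. \<phi> (p*r) * \<psi> (q*s) * \<chi> v)"
    by (rule sumc) (rule swap)
  also have "\<dots> = (\<Sum>(x,y)\<leftarrow>\<Delta> h. \<Sum>(a,b)\<leftarrow>\<Delta> x. \<Sum>(a1,a2)\<leftarrow>\<Delta> a. \<Sum>(m,n)\<leftarrow>\<Delta>' a2.
       \<Sum>(u,v)\<leftarrow>\<Delta>' y. \<Sum>(r,s)\<leftarrow>\<Delta>' u. \<phi> (S a1 * m * S b * r) * \<psi> (S n * s) * \<chi> v)"
    apply (rule sumc)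
    subgoal for x y using DS[of "\<lambda>p q. \<Sum>(u,v)\<leftarrow>\<Delta>' y. \<Sum>(r,s)\<leftarrow>\<Delta>' u. \<phi> (p*r) * \<psi> (q*s) * \<chi> v" x] by simp
    done
  also have "\<dots> = (\<Sum>(x,y)\<leftarrow>\<Delta> h. \<Sum>(a,b)\<leftarrow>\<Delta> x. \<Sum>(a1,a2)\<leftarrow>\<Delta> a. K a1 a2 b y)"
    apply (rule sumc)+
    subgoal for x y a b a1 a2 unfolding K_def
      apply (rule sumc)
      subgoal for m n using D2.coassoc[of "\<lambda>r s v. \<phi> (S a1 * m * S b * r) * \<psi> (S n * s) * \<chi> v" y] by simp
      done
    done
  also have "\<dots> = (\<Sum>(x,y)\<leftarrow>\<Delta> h. \<Sum>(y1,y2)\<leftarrow>\<Delta> y. \<Sum>(z1,z2)\<leftarrow>\<Delta> y2. K x y1 z1 z2)"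
    by (rule D1.fold4_lll) (rule K1)+
  also have "\<dots> = (\<Sum>(x,y)\<leftarrow>\<Delta> h. \<Sum>(z,w)\<leftarrow>\<Delta> y. \<Sum>(z1,z2)\<leftarrow>\<Delta> z. K x z1 z2 w)"
    by (rule D1.fold4_rl[symmetric]) (rule K1)+
  also have "\<dots> = (\<Sum>(x,y)\<leftarrow>\<Delta> h. \<Sum>(u,v)\<leftarrow>\<Delta>' y. \<Sum>(y1,y2)\<leftarrow>\<Delta> v. \<Sum>(u',v')\<leftarrow>\<Delta>' y2. \<phi> (S x * u) * \<psi> (S y1 * u') * \<chi> v')"
    apply (rule sumc)
    subgoal for x y using brace[of "\<lambda>A B C. \<Sum>(u',v')\<leftarrow>\<Delta>' C. \<phi> (S x * A) * \<psi> (S B * u') * \<chi> v'" y]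
      unfolding K_def by (simp add: mult.assoc)
    done
  finally show ?thesis .
qed

lemma part5:
  assumes \<phi>: "lin \<phi>" and \<psi>: "lin \<psi>" and \<chi>: "lin \<chi>"
  shows "(\<Sum>(x,y)\<leftarrow>\<Delta> h. \<Sum>(u,v)\<leftarrow>\<Delta>' y. \<Sum>(b1,b2)\<leftarrow>\<Delta> v. \<phi> (S x * u) * \<psi> b1 * \<chi> b2) =
    (\<Sum>(x,y)\<leftarrow>\<Delta> h. \<Sum>(x1,x2)\<leftarrow>\<Delta> x. \<Sum>(u,v)\<leftarrow>\<Delta>' x2. \<Sum>(y1,y2)\<leftarrow>\<Delta> y. \<Sum>(u',v')\<leftarrow>\<Delta>' y2.
       \<phi> (S x1 * u * (S y1 * u')) * \<psi> v * \<chi> v')"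
proof -
  have [simp]: "lmap g \<Longrightarrow> lin (\<lambda>x. \<phi> (g x))" for g using LR5 \<phi> by blast
  have [simp]: "lmap g \<Longrightarrow> lin (\<lambda>x. \<psi> (g x))" for g using LR5 \<psi> by blast
  have [simp]: "lmap g \<Longrightarrow> lin (\<lambda>x. \<chi> (g x))" for g using LR5 \<chi> by blast
  note [simp] = \<phi> \<psi> \<chi>
  define K where "K = (\<lambda>c1 c2 c3 c4. \<Sum>(p,p')\<leftarrow>\<Delta>' c2. \<Sum>(r,r')\<leftarrow>\<Delta>' c4.
      \<phi> (S c1 * p * S c3 * r) * \<psi> p' * \<chi> r')"
  have K1: "\<forall>b c d. lin (\<lambda>a. K a b c d)" "\<forall>a c d. lin (\<lambda>b. K a b c d)"
    "\<forall>a b d. lin (\<lambda>c. K a b c d)" "\<forall>a b c. lin (\<lambda>d. K a b c d)"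
    unfolding K_def by simp_all
  have "(\<Sum>(x,y)\<leftarrow>\<Delta> h. \<Sum>(u,v)\<leftarrow>\<Delta>' y. \<Sum>(b1,b2)\<leftarrow>\<Delta> v. \<phi> (S x * u) * \<psi> b1 * \<chi> b2) =
     (\<Sum>(x,y)\<leftarrow>\<Delta> h. \<Sum>(z,w)\<leftarrow>\<Delta> y. \<Sum>(z1,z2)\<leftarrow>\<Delta> z. K x z1 z2 w)"
    apply (rule sumc)
    subgoal for x y using brace[of "\<lambda>A B C. \<phi> (S x * A) * \<psi> B * \<chi> C" y]
      unfolding K_def by (simp add: mult.assoc)
    done
  also have "\<dots> = (\<Sum>(x,y)\<leftarrow>\<Delta> h. \<Sum>(y1,y2)\<leftarrow>\<Delta> y. \<Sum>(z1,z2)\<leftarrow>\<Delta> y2. K x y1 z1 z2)"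
    by (rule D1.fold4_rl) (rule K1)+
  also have "\<dots> = (\<Sum>(x,y)\<leftarrow>\<Delta> h. \<Sum>(x1,x2)\<leftarrow>\<Delta> x. \<Sum>(y1,y2)\<leftarrow>\<Delta> y. K x1 x2 y1 y2)"
    by (rule D1.fold4_mid[symmetric]) (rule K1)+
  also have "\<dots> = (\<Sum>(x,y)\<leftarrow>\<Delta> h. \<Sum>(x1,x2)\<leftarrow>\<Delta> x. \<Sum>(u,v)\<leftarrow>\<Delta>' x2. \<Sum>(y1,y2)\<leftarrow>\<Delta> y. \<Sum>(u',v')\<leftarrow>\<Delta>' y2.
       \<phi> (S x1 * u * (S y1 * u')) * \<psi> v * \<chi> v')"
    apply (rule sumc)+
    subgoal for x y x1 x2 unfolding K_def
      apply (rule trans[OF swap])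
      by (simp add: mult.assoc)
    done
  finally show ?thesis .
qed


lemma part4: "(\<Sum>(a,b)\<leftarrow>\<rho> h. sc (\<epsilon>' a) b) = h"
proof (rule separate)
  fix \<phi> assume \<phi>: "lin \<phi>"
  have [simp]: "lmap g \<Longrightarrow> lin (\<lambda>x. \<phi> (g x))" for g using LR5 \<phi> by blast
  have "\<phi> (\<Sum>(a,b)\<leftarrow>\<rho> h. sc (\<epsilon>' a) b) = (\<Sum>(a,b)\<leftarrow>\<rho> h. \<epsilon>' a * \<phi> b)"
    by (simp add: lin_sum_list[OF \<phi>] split_def lin_scale[OF \<phi>])
  also have "\<dots> = (\<Sum>(x,y)\<leftarrow>\<Delta> h. \<Sum>(u,v)\<leftarrow>\<Delta>' y. \<epsilon>' (S x * u) * \<phi> v)" by (rule rho_sum)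
  also have "\<dots> = (\<Sum>(x,y)\<leftarrow>\<Delta> h. \<epsilon> x * \<phi> y)"
    apply (rule sumc)
    subgoal for x y using D2.counit_l[of "\<lambda>v. \<epsilon>' (S x) * \<phi> v" y] \<phi>
      by (simp add: D2.e_mult mult_ac epsS)
    done
  also have "\<dots> = \<phi> h" using D1.counit_l[OF \<phi>] .
  finally show "\<phi> (\<Sum>(a,b)\<leftarrow>\<rho> h. sc (\<epsilon>' a) b) = \<phi> h" .
qed

lemma part6: "(\<Sum>(a,b)\<leftarrow>\<rho> h. sc (\<epsilon> b) a) = sc (\<epsilon> h) 1"
proof (rule separate)
  fix \<phi> assume \<phi>: "lin \<phi>"
  have [simp]: "lmap g \<Longrightarrow> lin (\<lambda>x. \<phi> (g x))" for g using LR5 \<phi> by blast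
  have "\<phi> (\<Sum>(a,b)\<leftarrow>\<rho> h. sc (\<epsilon> b) a) = (\<Sum>(a,b)\<leftarrow>\<rho> h. \<phi> a * \<epsilon> b)"
    by (simp add: lin_sum_list[OF \<phi>] split_def lin_scale[OF \<phi>] mult.commute)
  also have "\<dots> = (\<Sum>(x,y)\<leftarrow>\<Delta> h. \<Sum>(u,v)\<leftarrow>\<Delta>' y. \<phi> (S x * u) * \<epsilon> v)" by (rule rho_sum)
  also have "\<dots> = (\<Sum>(x,y)\<leftarrow>\<Delta> h. \<phi> (S x * y))"
    apply (rule sumc)
    subgoal for x y using D2.counit_r[of "\<lambda>u. \<phi> (S x * u)" y] by (simp add: eps_eq)
    done
  also have "\<dots> = \<epsilon> h * \<phi> 1" using D1.antipode_l[OF \<phi>] .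
  finally show "\<phi> (\<Sum>(a,b)\<leftarrow>\<rho> h. sc (\<epsilon> b) a) = \<phi> (sc (\<epsilon> h) 1)"
    by (simp add: lin_scale[OF \<phi>])
qed

lemma part1: "teq2 sc (\<rho> (a + b)) (\<rho> a @ \<rho> b)"
  unfolding teq2_def
proof (intro allI impI)
  fix \<phi> \<psi> assume \<phi>: "lin \<phi>" and \<psi>: "lin \<psi>"
  have [simp]: "lmap g \<Longrightarrow> lin (\<lambda>x. \<phi> (g x))" for g using LR5 \<phi> by blast
  have [simp]: "lmap g \<Longrightarrow> lin (\<lambda>x. \<psi> (g x))" for g using LR5 \<psi> by blast
  note [simp] = \<phi> \<psi>
  show "(\<Sum>(x,y)\<leftarrow>\<rho> (a + b). \<phi> x * \<psi> y) = (\<Sum>(x,y)\<leftarrow>\<rho> a @ \<rho> b. \<phi> x * \<psi> y)"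
    using coplin_add[OF D1.coplin, of "\<lambda>x y. \<Sum>(u,v)\<leftarrow>\<Delta>' y. \<phi> (S x * u) * \<psi> v" a b]
    by (simp add: rho_sum)
qed

lemma sum_cp_cmult: "(\<Sum>(a,b)\<leftarrow>L. (c::'k) * F a b) = c * (\<Sum>(a,b)\<leftarrow>L. F a b)"
  by (simp add: split_def sum_list_const_mult)

lemma part2: "teq2 sc (\<rho> (sc c a)) (map (\<lambda>(x, y). (sc c x, y)) (\<rho> a))"
  unfolding teq2_def
proof (intro allI impI)
  fix \<phi> \<psi> assume \<phi>: "lin \<phi>" and \<psi>: "lin \<psi>"
  have [simp]: "lmap g \<Longrightarrow> lin (\<lambda>x. \<phi> (g x))" for g using LR5 \<phi> by blast
  have [simp]: "lmap g \<Longrightarrow> lin (\<lambda>x. \<psi> (g x))" for g using LR5 \<psi> by blast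
  note [simp] = \<phi> \<psi>
  have "(\<Sum>(x,y)\<leftarrow>map (\<lambda>(x, y). (sc c x, y)) (\<rho> a). \<phi> x * \<psi> y) = (\<Sum>(x,y)\<leftarrow>\<rho> a. \<phi> (sc c x) * \<psi> y)"
    by (simp add: o_def split_def)
  also have "\<dots> = c * (\<Sum>(x,y)\<leftarrow>\<rho> a. \<phi> x * \<psi> y)"
    by (simp add: lin_scale[OF \<phi>] mult.assoc sum_cp_cmult)
  finally show "(\<Sum>(x,y)\<leftarrow>\<rho> (sc c a). \<phi> x * \<psi> y) = (\<Sum>(x,y)\<leftarrow>map (\<lambda>(x, y). (sc c x, y)) (\<rho> a). \<phi> x * \<psi> y)"
    using coplin_scale[OF D1.coplin, of "\<lambda>x y. \<Sum>(u,v)\<leftarrow>\<Delta>' y. \<phi> (S x * u) * \<psi> v" c a]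
    by (simp add: rho_sum)
qed

end

theorem lemma2p5:
  fixes sc :: "'k::field \<Rightarrow> 'h::ring_1 \<Rightarrow> 'h"
    and \<Delta> \<Delta>' :: "'h \<Rightarrow> ('h \<times> 'h) list"
    and \<epsilon> \<epsilon>' :: "'h \<Rightarrow> 'k"
    and S T :: "'h \<Rightarrow> 'h"
  assumes "hopf_brace sc \<Delta> \<epsilon> S \<Delta>' \<epsilon>' T"
  defines "\<rho> \<equiv> brace_coaction \<Delta> S \<Delta>'"
  shows
    "(\<forall>a b. teq2 sc (\<rho> (a + b)) (\<rho> a @ \<rho> b)) \<and>
     (\<forall>c a. teq2 sc (\<rho> (sc c a)) (map (\<lambda>(x, y). (sc c x, y)) (\<rho> a))) \<and>
     (\<forall>h. teq3 sc [(a1, a2, b). (a, b) \<leftarrow> \<rho> h, (a1, a2) \<leftarrow> \<Delta>' a]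
                  [(a, c, d). (a, b) \<leftarrow> \<rho> h, (c, d) \<leftarrow> \<rho> b]) \<and>
     (\<forall>h. (\<Sum>(a, b)\<leftarrow>\<rho> h. sc (\<epsilon>' a) b) = h) \<and>
     (\<forall>h. teq3 sc [(a, b1, b2). (a, b) \<leftarrow> \<rho> h, (b1, b2) \<leftarrow> \<Delta> b]
                  [(a * c, b, d). (x, y) \<leftarrow> \<Delta> h, (a, b) \<leftarrow> \<rho> x, (c, d) \<leftarrow> \<rho> y]) \<and>
     (\<forall>h. (\<Sum>(a, b)\<leftarrow>\<rho> h. sc (\<epsilon> b) a) = sc (\<epsilon> h) 1)"
proof -
  have ka: "k_algebra sc" and HA1: "hopf_alg sc \<Delta> \<epsilon> S" and HA2: "hopf_alg sc \<Delta>' \<epsilon>' T"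
    and BR: "\<forall>h. teq3 sc
        [(a, b1, b2). (a, b) \<leftarrow> \<Delta>' h, (b1, b2) \<leftarrow> \<Delta> b]
        [(p * S y * r, p', r'). (x, y, z) \<leftarrow> cop3 \<Delta> h, (p, p') \<leftarrow> \<Delta>' x, (r, r') \<leftarrow> \<Delta>' z]"
    using assms(1) unfolding hopf_brace_def by blast+
  have vs: "vector_space sc" using ka unfolding k_algebra_def by blast
  interpret hbr sc \<Delta> \<epsilon> S \<Delta>' \<epsilon>' T
    by (intro hbr.intro kalg.intro hbr_axioms.intro kalg_axioms.intro vs ka HA1 HA2 BR)
  have p3: "teq3 sc [(a1, a2, b). (a, b) \<leftarrow> \<rho> h, (a1, a2) \<leftarrow> \<Delta>' a]
                  [(a, c, d). (a, b) \<leftarrow> \<rho> h, (c, d) \<leftarrow> \<rho> b]" for h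
    unfolding teq3_def \<rho>_def
  proof (intro allI impI)
    fix \<phi> \<psi> \<chi> assume \<phi>: "lin \<phi>" and \<psi>: "lin \<psi>" and \<chi>: "lin \<chi>"
    show "(\<Sum>(a, b, c)\<leftarrow>[(a1, a2, b). (a, b) \<leftarrow> brace_coaction \<Delta> S \<Delta>' h, (a1, a2) \<leftarrow> \<Delta>' a]. \<phi> a * \<psi> b * \<chi> c) =
          (\<Sum>(a, b, c)\<leftarrow>[(a, c, d). (a, b) \<leftarrow> brace_coaction \<Delta> S \<Delta>' h, (c, d) \<leftarrow> brace_coaction \<Delta> S \<Delta>' b]. \<phi> a * \<psi> b * \<chi> c)"
      using part3[OF \<phi> \<psi> \<chi>, of h] by (simp add: brace_coaction_def o_def prod.case_distrib)
  qed
  have p5: "teq3 sc [(a, b1, b2). (a, b) \<leftarrow> \<rho> h, (b1, b2) \<leftarrow> \<Delta> b]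
                  [(a * c, b, d). (x, y) \<leftarrow> \<Delta> h, (a, b) \<leftarrow> \<rho> x, (c, d) \<leftarrow> \<rho> y]" for h
    unfolding teq3_def \<rho>_def
  proof (intro allI impI)
    fix \<phi> \<psi> \<chi> assume \<phi>: "lin \<phi>" and \<psi>: "lin \<psi>" and \<chi>: "lin \<chi>"
    show "(\<Sum>(a, b, c)\<leftarrow>[(a, b1, b2). (a, b) \<leftarrow> brace_coaction \<Delta> S \<Delta>' h, (b1, b2) \<leftarrow> \<Delta> b]. \<phi> a * \<psi> b * \<chi> c) =
          (\<Sum>(a, b, c)\<leftarrow>[(a * c, b, d). (x, y) \<leftarrow> \<Delta> h, (a, b) \<leftarrow> brace_coaction \<Delta> S \<Delta>' x, (c, d) \<leftarrow> brace_coaction \<Delta> S \<Delta>' y]. \<phi> a * \<psi> b * \<chi> c)"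
      using part5[OF \<phi> \<psi> \<chi>, of h] by (simp add: brace_coaction_def o_def prod.case_distrib)
  qed
  show ?thesis
    using part1 part2 p3 part4 p5 part6 unfolding \<rho>_def by blast
qed

end
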